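(* For each positive integer $\delta$, the polynomials $$P_{2\delta-1}(A,B,C)=(-1)^\delta A\,\mathrm{Poly}_{\delta-1,\delta,\delta-1}(A,B)\mathrm{Poly}_{\delta-1,\delta,\delta-1}(A,C)+B\,\mathrm{Poly}_{\delta-1,\delta,\delta-1}(B,A)\mathrm{Poly}_{\delta-1,\delta,\delta-1}(A,C)+C\,\mathrm{Poly}_{\delta-1,\delta,\delta-1}(A,B)\mathrm{Poly}_{\delta-1,\delta,\delta-1}(C,A)+(-1)^{\delta+1}\tbinom{2\delta}{\delta}\tbinom{3\delta-1}{\delta-1}A^{2\delta-1}$$ and $$P_{2\delta}(A,B,C)=(-1)^{\delta+1}\mathrm{Poly}_{\delta,\delta,\delta}(A,B)\mathrm{Poly}_{\delta,\delta,\delta}(A,C)+B\,\mathrm{Poly}_{\delta-1,\delta,\delta}(B,A)\mathrm{Poly}_{\delta,\delta,\delta}(A,C)+C\,\mathrm{Poly}_{\delta,\delta,\delta}(A,B)\mathrm{Poly}_{\delta-1,\delta,\delta}(C,A)+(-1)^\delta\tbinom{2\delta}{\delta}\tbinom{3\delta}{\delta}A^{2\delta}$$ both lie in the ideal $(A+B+C)\mathbb Z[A,B,C]$.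
   Context: For non-negative integers $d,a,b$, $\mathrm{Poly}_{d,a,b}(A,B)=\sum_{i=0}^d(-1)^i\binom{a+d-i}{a}\binom{b+i}{b}A^{d-i}B^i\in\mathbb Z[A,B]$. *)

theory Defs
  imports "HOL-Computational_Algebra.Polynomial"
begin

definition polyDab :: "nat \<Rightarrow> nat \<Rightarrow> nat \<Rightarrow> 'r::comm_ring_1 \<Rightarrow> 'r \<Rightarrow> 'r" where
  "polyDab d a b X Y = (\<Sum>i=0..d. (-1)^i * of_nat ((a+d-i) choose a) * of_nat ((b+i) choose b)
                                   * X^(d-i) * Y^i)"

text \<open>Z[A,B,C] is realised as ((Z[A])[B])[C], i.e. the type int poly poly poly.\<close>
type_synonym zABC = "int poly poly poly"

definition varA :: zABC where "varA = [:[:[:0, 1:]:]:]"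
definition varB :: zABC where "varB = [:[:0, 1:]:]"
definition varC :: zABC where "varC = [:0, 1:]"

definition P_odd :: "nat \<Rightarrow> zABC" where
  "P_odd \<delta> = (let A = varA; B = varB; C = varC; Q = polyDab (\<delta>-1) \<delta> (\<delta>-1) in
     (-1)^\<delta> * A * Q A B * Q A C + B * Q B A * Q A C + C * Q A B * Q C A
     + (-1)^(\<delta>+1) * of_nat ((2*\<delta>) choose \<delta>) * of_nat ((3*\<delta>-1) choose (\<delta>-1)) * A^(2*\<delta>-1))"

definition P_even :: "nat \<Rightarrow> zABC" where
  "P_even \<delta> = (let A = varA; B = varB; C = varC; Q = polyDab \<delta> \<delta> \<delta>;
                    R = polyDab (\<delta>-1) \<delta> \<delta> in
     (-1)^(\<delta>+1) * Q A B * Q A C + B * R B A * Q A C + C * Q A B * R C A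
     + (-1)^\<delta> * of_nat ((2*\<delta>) choose \<delta>) * of_nat ((3*\<delta>) choose \<delta>) * A^(2*\<delta>))"

end

theory Submission
  imports Defs "HOL-Computational_Algebra.Fraction_Field"
begin

lemma wronsk:
  fixes W :: "'a::{idom,ring_char_0} poly" and c D :: 'a
  assumes ode: "pCons 0 (pderiv (pderiv W)) - pCons 0 (pCons 0 (pderiv (pderiv W)))
     + smult c (pderiv W) - pCons 0 (pderiv W) + smult (D*D) W = 0"
  shows "D*D*poly W x * poly W (1-x) - x*(1-x)*poly (pderiv W) x * poly (pderiv W) (1-x)
       = D*D*poly W 0 * poly W 1"
proof -
  define X :: "'a poly" where "X = [:0,1:]"
  define Y :: "'a poly" where "Y = [:1,-1:]"
  have pc0: "pCons 0 p = X * p" for p by (simp add: X_def)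
  define P1 where "P1 = pderiv W"
  define P2 where "P2 = pderiv P1"
  define W1 where "W1 = pcompose W Y"
  define P1c where "P1c = pcompose P1 Y"
  define P2c where "P2c = pcompose P2 Y"
  have E1: "X*P2 - X*(X*P2) + smult c P1 - X*P1 + smult (D*D) W = 0"
    using ode by (simp add: pc0 P1_def P2_def)
  have XY: "pcompose X Y = Y" by (simp add: X_def Y_def pcompose_pCons)
  have E2: "Y*P2c - Y*(Y*P2c) + smult c P1c - Y*P1c + smult (D*D) W1 = 0"
  proof -
    have "pcompose (X*P2 - X*(X*P2) + smult c P1 - X*P1 + smult (D*D) W) Y = 0"
      using E1 by simp
    thus ?thesis by (simp add: pcompose_diff pcompose_add pcompose_mult pcompose_smult XY
        W1_def P1c_def P2c_def)
  qed
  have dY: "pderiv Y = [:-1:]" by (simp add: Y_def pderiv_pCons)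
  have dX: "pderiv X = 1" by (simp add: X_def pderiv_pCons)
  have YX: "Y = 1 - X" by (simp add: X_def Y_def one_pCons)
  define G where "G = smult (D*D) (W*W1) - X*Y*P1*P1c"
  have dW1: "pderiv W1 = - P1c" using dY by (simp add: W1_def P1c_def pderiv_pcompose P1_def)
  have dP1c: "pderiv P1c = - P2c" using dY by (simp add: P2c_def P1c_def pderiv_pcompose P2_def)
  have "pderiv G = smult (D*D) (W * pderiv W1 + W1 * pderiv W) - (X*Y*P1 * pderiv P1c + P1c * (X*Y*pderiv P1 + P1 * (X * pderiv Y + Y * pderiv X)))"
    unfolding G_def by (simp only: pderiv_diff pderiv_smult pderiv_mult)
  also have "\<dots> = smult (D*D) (W * (-P1c) + W1 * P1) - (X*Y*(P1*(-P2c) + P1c*P2) + P1*P1c*(X*(-1) + Y))"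
    by (simp add: dW1 dP1c dX dY P2_def[symmetric] P1_def[symmetric] algebra_simps)
  also have "\<dots> = P1 * (Y*P2c - Y*(Y*P2c) + smult c P1c - Y*P1c + smult (D*D) W1)
          - P1c * (X*P2 - X*(X*P2) + smult c P1 - X*P1 + smult (D*D) W)"
    by (simp add: YX algebra_simps smult_diff_right smult_add_right)
  also have "\<dots> = 0" using E1 E2 by simp
  finally have "pderiv G = 0" .
  hence "degree G = 0" by (simp add: pderiv_eq_0_iff)
  then obtain k where "G = [:k:]" by (rule degree_eq_zeroE)
  hence "poly G x = poly G 0" by simp
  thus ?thesis
    by (simp add: G_def W1_def P1c_def P1_def X_def Y_def poly_pcompose algebra_simps)
qed

lemma coeff_pCons0: "coeff (pCons 0 p) n = (if n = 0 then 0 else coeff p (n-1))"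
  by (cases n) auto

lemma ode_from_rec:
  fixes w :: "nat \<Rightarrow> nat" and W :: "'a::{idom,ring_char_0} poly"
  assumes cW: "\<And>n. coeff W n = of_nat (w n)"
    and rec: "\<And>n. (n+1)*(n+1)*w(n+1) + d*d*w n = (n+1)*m*w(n+1) + n*n*w n"
  shows "pCons 0 (pderiv (pderiv W)) - pCons 0 (pCons 0 (pderiv (pderiv W)))
     + smult (1 - of_nat m) (pderiv W) - pCons 0 (pderiv W) + smult (of_nat d * of_nat d) W = 0"
proof (rule poly_eqI)
  fix n :: nat
  consider "n = 0" | "n = 1" | k where "n = k + 2" by (metis One_nat_def add_2_eq_Suc' not0_implies_Suc)
  then show "coeff (pCons 0 (pderiv (pderiv W)) - pCons 0 (pCons 0 (pderiv (pderiv W)))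
     + smult (1 - of_nat m) (pderiv W) - pCons 0 (pderiv W) + smult (of_nat d * of_nat d) W) n = coeff 0 n"
  proof cases
    case 1
    show ?thesis using rec[of 0] unfolding 1 by (simp add: coeff_pCons0 coeff_pderiv cW algebra_simps) (drule arg_cong[where f="of_nat::nat\<Rightarrow>'a"], simp add: algebra_simps)
  next
    case 2
    show ?thesis using rec[of 1] unfolding 2 by (simp add: coeff_pCons0 coeff_pderiv cW algebra_simps) (drule arg_cong[where f="of_nat::nat\<Rightarrow>'a"], simp add: algebra_simps)
  next
    case 3
    show ?thesis using rec[of "k+2"] unfolding 3 by (simp add: coeff_pCons0 coeff_pderiv cW algebra_simps numeral_eq_Suc) (drule arg_cong[where f="of_nat::nat\<Rightarrow>'a"], simp add: algebra_simps)
  qed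
qed

definition cc :: "nat \<Rightarrow> nat \<Rightarrow> nat \<Rightarrow> nat \<Rightarrow> nat" where
  "cc d a b i = ((a+d-i) choose a) * ((b+i) choose b)"

lemma A1: "Suc k * (n choose Suc k) = (n - k) * (n choose k)"
  using binomial_absorption[of k n] binomial_absorb_comp[of n k] by simp

lemma conv: "(\<Sum>j\<le>N. (j choose p) * ((N-j) choose q)) = Suc N choose (p+q+1)"
proof (induction N arbitrary: q)
  case 0
  then show ?case by (cases p; cases q) auto
next
  case (Suc N)
  show ?case
  proof (cases q)
    case 0
    then show ?thesis by (simp add: sum_choose_upper del: binomial_Suc_Suc)
  next
    case (Suc q')
    have "(\<Sum>j\<le>Suc N. (j choose p) * ((Suc N - j) choose q))
        = (\<Sum>j\<le>N. (j choose p) * ((Suc N - j) choose q))"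
      using Suc by simp
    also have "\<dots> = (\<Sum>j\<le>N. (j choose p) * ((N - j) choose q') + (j choose p) * ((N - j) choose q))"
      by (rule sum.cong) (auto simp: Suc Suc_diff_le algebra_simps)
    also have "\<dots> = (Suc N choose (p+q'+1)) + (Suc N choose (p+q+1))"
      by (simp add: sum.distrib Suc.IH)
    also have "\<dots> = Suc (Suc N) choose (p+q+1)" using Suc by simp
    finally show ?thesis .
  qed
qed

definition eo :: "nat \<Rightarrow> nat \<Rightarrow> nat" where
  "eo p k = ((Suc p + p - k) choose p) * ((p+k) choose p)"

lemma O1:
  assumes "k \<le> Suc p"
  shows "eo p k = cc p (Suc p) p k + cc p (Suc p) p (Suc p - k)"
proof -
  obtain r where r: "Suc p = k + r" using assms le_Suc_ex by blast
  define X where "X = (Suc p + p - k) choose p"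
  define Y where "Y = (p + k) choose p"
  define Z where "Z = (Suc p + p - k) choose Suc p"
  define U where "U = (p + k) choose Suc p"
  have h1: "Suc p * Z = r * X"
    using A1[of p "Suc p + p - k"] r unfolding X_def Z_def by simp
  have h2: "Suc p * U = k * Y"
    using A1[of p "p + k"] unfolding U_def Y_def by simp
  have e1: "cc p (Suc p) p k = Z * Y" by (simp add: cc_def Z_def Y_def)
  have e2: "cc p (Suc p) p (Suc p - k) = U * X"
    using assms by (simp add: cc_def U_def X_def)
  have "Suc p * (Z*Y + U*X) = (Suc p*Z)*Y + (Suc p*U)*X" by (simp add: algebra_simps)
  also have "\<dots> = (r*X)*Y + (k*Y)*X" by (simp only: h1 h2)
  also have "\<dots> = (k + r) * (X * Y)" by (simp add: algebra_simps)
  also have "\<dots> = Suc p * (X*Y)" using r by simp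
  finally have "Z*Y + U*X = X*Y" by (metis nat_mult_eq_cancel1 zero_less_Suc)
  thus ?thesis by (simp add: e1 e2 eo_def X_def Y_def)
qed

lemma O2:
  assumes "k \<le> Suc p"
  shows "k * eo p k = Suc p * cc p (Suc p) p (Suc p - k)"
proof -
  have h2: "Suc p * ((p + k) choose Suc p) = k * ((p + k) choose p)"
    using A1[of p "p + k"] by simp
  have e2: "cc p (Suc p) p (Suc p - k) = ((p + k) choose Suc p) * ((Suc p + p - k) choose p)"
    using assms by (simp add: cc_def)
  show ?thesis unfolding e2 eo_def
    by (metis h2 mult.assoc mult.commute)
qed

lemma O5: "cc p (Suc p) p (Suc p) = 0"
  by (simp add: cc_def)

lemma Orec:
  fixes p n :: nat and w :: "nat \<Rightarrow> nat"
  defines "w \<equiv> (\<lambda>n. if n \<le> Suc p then eo p n else 0)"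
  shows "(n+1)*(n+1)*w(n+1) + Suc p*Suc p*w n = (n+1)*(2*Suc p)*w(n+1) + n*n*w n"
proof -
  consider "n \<le> p" | "n = Suc p" | "n > Suc p" by linarith
  then show ?thesis
  proof cases
    case 1
    from le_Suc_ex[OF 1] obtain r where r: "p = n + r" by blast
    define X where "X = eo p (n+1)"
    define Y where "Y = eo p n"
    have B0: "(p+1-n) * ((2*p+1-n) choose p) = (2*p+1-n) * ((2*p-n) choose p)"
    proof -
      have e: "2*p+1-n-p = p+1-n" "2*p+1-n-1 = 2*p-n" using 1 by auto
      have "(2*p+1-n-p) * ((2*p+1-n) choose p) = (2*p+1-n) * ((2*p+1-n-1) choose p)" by (rule binomial_absorb_comp)
      thus ?thesis unfolding e .
    qed
    have rr: "p+1-n = r+1" using r by simp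
    have B1: "(r+1) * ((2*p+1-n) choose p) = (2*p+1-n) * ((2*p-n) choose p)"
      using B0 unfolding rr .
    have B2: "(n+1) * ((p+n+1) choose p) = (p+n+1) * ((p+n) choose p)"
    proof -
      have e: "p+n+1-p = n+1" "p+n+1-1 = p+n" by auto
      have "(p+n+1-p) * ((p+n+1) choose p) = (p+n+1) * ((p+n+1-1) choose p)" by (rule binomial_absorb_comp)
      thus ?thesis unfolding e .
    qed
    have a1: "Suc p + p - (n + 1) = 2*p - n" "p + (n+1) = p+n+1" "Suc p + p - n = 2*p+1-n"
      by auto
    have X: "X = ((2*p-n) choose p) * ((p+n+1) choose p)"
      unfolding X_def eo_def by (simp only: a1)
    have Y: "Y = ((2*p+1-n) choose p) * ((p+n) choose p)"
      unfolding Y_def eo_def by (simp only: a1)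
    have H: "(n+1)*(n+2*r+1)*X = (r+1)*(2*n+r+1)*Y"
    proof -
      have "(n+1)*(n+2*r+1)*X = ((2*p+1-n) * ((2*p-n) choose p)) * ((n+1) * ((p+n+1) choose p))"
        unfolding X using r by (simp add: algebra_simps)
      also have "\<dots> = ((r+1) * ((2*p+1-n) choose p)) * ((p+n+1) * ((p+n) choose p))"
        by (simp only: B1 B2)
      also have "\<dots> = (r+1)*(2*n+r+1)*Y" unfolding Y using r by (simp add: algebra_simps)
      finally show ?thesis .
    qed
    have wn: "w n = Y" "w (n+1) = X" using 1 by (auto simp: w_def X_def Y_def)
    have q1: "Suc p * Suc p = n*n + (r+1)*(2*n+r+1)" using r by (simp add: algebra_simps)
    have q2: "(n+1)*(2*Suc p) = (n+1)*(n+1) + (n+1)*(n+2*r+1)" using r by (simp add: algebra_simps)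
    have "(n+1)*(n+1)*X + Suc p*Suc p*Y = (n+1)*(n+1)*X + n*n*Y + (r+1)*(2*n+r+1)*Y"
      unfolding q1 by (simp add: algebra_simps)
    also have "\<dots> = (n+1)*(n+1)*X + n*n*Y + (n+1)*(n+2*r+1)*X" by (simp only: H)
    also have "\<dots> = (n+1)*(2*Suc p)*X + n*n*Y" unfolding q2 by (simp add: algebra_simps)
    finally show ?thesis by (simp only: wn)
  next
    case 2
    then show ?thesis by (simp add: w_def)
  next
    case 3
    then show ?thesis by (simp add: w_def)
  qed
qed

lemma cancel2: "Suc p * (a::nat) = 2 * Suc p * b \<Longrightarrow> a = 2 * b"
  by (metis mult.left_commute mult.assoc nat_mult_eq_cancel1 zero_less_Suc)

lemma Osum: "eo p 0 * (\<Sum>k\<le>Suc p. eo p k) = ((2*Suc p) choose Suc p) * ((3*Suc p - 1) choose p)"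
proof -
  let ?f = "\<lambda>j. (j choose p) * ((3*p+1-j) choose p)"
  have "(\<Sum>j\<le>3*p+1. ?f j) = (\<Sum>j\<in>{p..2*p+1}. ?f j)"
    by (rule sum.mono_neutral_right) (auto simp: binomial_eq_0)
  also have "\<dots> = (\<Sum>k\<in>{0..Suc p}. ?f (k+p))"
  proof -
    have eqs: "{p..2*p+1} = {0+p..Suc p+p}" by simp
    show ?thesis unfolding eqs by (rule sum.shift_bounds_cl_nat_ivl)
  qed
  also have "\<dots> = (\<Sum>k\<le>Suc p. eo p k)"
  proof (rule sum.cong)
    fix k assume "k \<in> {..Suc p}"
    have "3*p+1-(k+p) = Suc p + p - k" by arith
    thus "?f (k+p) = eo p k" by (simp add: eo_def add.commute mult.commute)
  qed (simp add: atMost_atLeast0)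
  finally have S1: "(\<Sum>j\<le>3*p+1. ?f j) = (\<Sum>k\<le>Suc p. eo p k)" .
  have S0: "(\<Sum>j\<le>3*p+1. ?f j) = Suc (3*p+1) choose (2*p+1)"
    using conv[where N="3*p+1" and p=p and q=p] by (simp only: mult_2)
  have S: "(\<Sum>k\<le>Suc p. eo p k) = Suc (3*p+1) choose (2*p+1)" unfolding S1[symmetric] by (rule S0)
  have e0: "eo p 0 = (2*p+1) choose p" by (simp add: eo_def mult_2)
  have c1: "Suc p * ((2*Suc p) choose Suc p) = 2 * Suc p * ((2*p+1) choose p)"
  proof -
    have "2*Suc p = Suc (2*p+1)" by simp
    hence "Suc p * ((2*Suc p) choose Suc p) = Suc (2*p+1) * ((2*p+1) choose p)"
      using Suc_times_binomial_eq[of "2*p+1" p] by (simp only: mult.commute)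
    thus ?thesis by (simp only: \<open>2*Suc p = Suc (2*p+1)\<close>)
  qed
  have c2: "(Suc (3*p+1) choose (2*p+1)) = (Suc (3*p+1) choose Suc p)"
  proof -
    have "Suc (3*p+1) - Suc p = 2*p+1" by simp
    moreover have "Suc p \<le> Suc (3*p+1)" by simp
    ultimately show ?thesis using binomial_symmetric[of "Suc p" "Suc (3*p+1)"] by metis
  qed
  have c3: "Suc p * (Suc (3*p+1) choose Suc p) = 2 * Suc p * ((3*p+2) choose p)"
  proof -
    have "Suc (3*p+1) = 3*p+2" "3*p+2-p = 2*Suc p" by simp_all
    thus ?thesis using A1[of p "3*p+2"] by (simp only: mult.assoc)
  qed
  have d1: "((2*Suc p) choose Suc p) = 2 * ((2*p+1) choose p)"
    using c1 by (rule cancel2)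
  have d3: "(Suc (3*p+1) choose Suc p) = 2 * ((3*p+2) choose p)"
    using c3 by (rule cancel2)
  have t: "3*Suc p - 1 = 3*p+2" by simp
  show ?thesis unfolding S c2 e0 d1 d3 t by (simp only: ac_simps)
qed

definition ev :: "nat \<Rightarrow> nat \<Rightarrow> nat" where
  "ev p k = ((Suc p + Suc p - k) choose Suc p) * ((p+k) choose p)"

lemma E1:
  assumes "k \<le> Suc p"
  shows "cc (Suc p) (Suc p) (Suc p) k = ev p k + cc p (Suc p) (Suc p) (Suc p - k)"
proof -
  define X where "X = (Suc p + Suc p - k) choose Suc p"
  have P: "(Suc p + k) choose Suc p = ((p+k) choose p) + ((p+k) choose Suc p)"
  proof -
    have "Suc p + k = Suc (p+k)" by simp
    thus ?thesis using binomial_Suc_Suc[of "p+k" p] by metis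
  qed
  have e1: "cc (Suc p) (Suc p) (Suc p) k = X * ((Suc p + k) choose Suc p)"
    by (simp add: cc_def X_def del: binomial_Suc_Suc)
  have e2: "cc p (Suc p) (Suc p) (Suc p - k) = ((p+k) choose Suc p) * X"
  proof -
    have "Suc p + p - (Suc p - k) = p + k" "Suc p + (Suc p - k) = Suc p + Suc p - k" using assms by auto
    thus ?thesis unfolding cc_def X_def by metis
  qed
  show ?thesis unfolding e1 e2 P ev_def X_def[symmetric] by (simp add: algebra_simps del: binomial_Suc_Suc)
qed

lemma E2:
  assumes "k \<le> Suc p"
  shows "k * ev p k = Suc p * cc p (Suc p) (Suc p) (Suc p - k)"
proof -
  define X where "X = (Suc p + Suc p - k) choose Suc p"
  have h2: "Suc p * ((p + k) choose Suc p) = k * ((p + k) choose p)"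
    using A1[of p "p + k"] by simp
  have e2: "cc p (Suc p) (Suc p) (Suc p - k) = ((p+k) choose Suc p) * X"
  proof -
    have "Suc p + p - (Suc p - k) = p + k" "Suc p + (Suc p - k) = Suc p + Suc p - k" using assms by auto
    thus ?thesis unfolding cc_def X_def by metis
  qed
  show ?thesis unfolding e2 ev_def X_def[symmetric]
    by (metis h2 mult.assoc mult.commute)
qed

lemma E5: "cc p (Suc p) (Suc p) (Suc p) = 0"
  by (simp add: cc_def)

lemma Erec:
  fixes p n :: nat and w :: "nat \<Rightarrow> nat"
  defines "w \<equiv> (\<lambda>n. if n \<le> Suc p then ev p n else 0)"
  shows "(n+1)*(n+1)*w(n+1) + Suc p*Suc p*w n = (n+1)*(2*Suc p+1)*w(n+1) + n*n*w n"
proof -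
  consider "n \<le> p" | "n = Suc p" | "n > Suc p" by linarith
  then show ?thesis
  proof cases
    case 1
    from le_Suc_ex[OF 1] obtain r where r: "p = n + r" by blast
    define X where "X = ev p (n+1)"
    define Y where "Y = ev p n"
    have B0: "(p+1-n) * ((2*p+2-n) choose Suc p) = (2*p+2-n) * ((2*p+1-n) choose Suc p)"
    proof -
      have e: "2*p+2-n-Suc p = p+1-n" "2*p+2-n-1 = 2*p+1-n" using 1 by auto
      have "(2*p+2-n-Suc p) * ((2*p+2-n) choose Suc p) = (2*p+2-n) * ((2*p+2-n-1) choose Suc p)"
        by (rule binomial_absorb_comp)
      thus ?thesis unfolding e .
    qed
    have rr: "p+1-n = r+1" using r by simp
    have B1: "(r+1) * ((2*p+2-n) choose Suc p) = (2*p+2-n) * ((2*p+1-n) choose Suc p)"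
      using B0 unfolding rr .
    have B2: "(n+1) * ((p+n+1) choose p) = (p+n+1) * ((p+n) choose p)"
    proof -
      have e: "p+n+1-p = n+1" "p+n+1-1 = p+n" by auto
      have "(p+n+1-p) * ((p+n+1) choose p) = (p+n+1) * ((p+n+1-1) choose p)" by (rule binomial_absorb_comp)
      thus ?thesis unfolding e .
    qed
    have a1: "Suc p + Suc p - (n + 1) = 2*p+1 - n" "p + (n+1) = p+n+1" "Suc p + Suc p - n = 2*p+2-n"
      by auto
    have X: "X = ((2*p+1-n) choose Suc p) * ((p+n+1) choose p)"
      unfolding X_def ev_def by (simp only: a1)
    have Y: "Y = ((2*p+2-n) choose Suc p) * ((p+n) choose p)"
      unfolding Y_def ev_def by (simp only: a1)
    have H: "(n+1)*(n+2*r+2)*X = (r+1)*(2*n+r+1)*Y"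
    proof -
      have t1: "n+2*r+2 = 2*p+2-n" "2*n+r+1 = p+n+1" using r by auto
      have "(n+1)*(n+2*r+2)*X = ((2*p+2-n) * ((2*p+1-n) choose Suc p)) * ((n+1) * ((p+n+1) choose p))"
        unfolding X t1 by (simp only: ac_simps)
      also have "\<dots> = ((r+1) * ((2*p+2-n) choose Suc p)) * ((p+n+1) * ((p+n) choose p))"
        by (simp only: B1 B2)
      also have "\<dots> = (r+1)*(2*n+r+1)*Y" unfolding Y t1 by (simp only: ac_simps)
      finally show ?thesis .
    qed
    have wn: "w n = Y" "w (n+1) = X" using 1 by (auto simp: w_def X_def Y_def)
    have q1: "Suc p * Suc p = n*n + (r+1)*(2*n+r+1)" using r by (simp add: algebra_simps)
    have q2: "(n+1)*(2*Suc p+1) = (n+1)*(n+1) + (n+1)*(n+2*r+2)" using r by (simp add: algebra_simps)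
    have "(n+1)*(n+1)*X + Suc p*Suc p*Y = (n+1)*(n+1)*X + n*n*Y + (r+1)*(2*n+r+1)*Y"
      unfolding q1 by (simp add: algebra_simps)
    also have "\<dots> = (n+1)*(n+1)*X + n*n*Y + (n+1)*(n+2*r+2)*X" by (simp only: H)
    also have "\<dots> = (n+1)*(2*Suc p+1)*X + n*n*Y" unfolding q2 by (simp add: algebra_simps)
    finally show ?thesis by (simp only: wn)
  next
    case 2
    then show ?thesis by (simp add: w_def)
  next
    case 3
    then show ?thesis by (simp add: w_def)
  qed
qed

lemma Esum: "ev p 0 * (\<Sum>k\<le>Suc p. ev p k) = ((2*Suc p) choose Suc p) * ((3*Suc p) choose Suc p)"
proof -
  let ?f = "\<lambda>j. (j choose p) * ((3*p+2-j) choose Suc p)"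
  have "(\<Sum>j\<le>3*p+2. ?f j) = (\<Sum>j\<in>{p..2*p+1}. ?f j)"
    by (rule sum.mono_neutral_right) (auto simp: binomial_eq_0 simp del: binomial_Suc_Suc)
  also have "\<dots> = (\<Sum>k\<in>{0..Suc p}. ?f (k+p))"
  proof -
    have eqs: "{p..2*p+1} = {0+p..Suc p+p}" by simp
    show ?thesis unfolding eqs by (rule sum.shift_bounds_cl_nat_ivl)
  qed
  also have "\<dots> = (\<Sum>k\<le>Suc p. ev p k)"
  proof (rule sum.cong)
    fix k assume "k \<in> {..Suc p}"
    have "3*p+2-(k+p) = Suc p + Suc p - k" by arith
    thus "?f (k+p) = ev p k" by (simp add: ev_def add.commute mult.commute del: binomial_Suc_Suc)
  qed (simp add: atMost_atLeast0)
  finally have S1: "(\<Sum>j\<le>3*p+2. ?f j) = (\<Sum>k\<le>Suc p. ev p k)" .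
  have S0: "(\<Sum>j\<le>3*p+2. ?f j) = Suc (3*p+2) choose (p + Suc p + 1)"
    by (rule conv[where N="3*p+2" and p=p and q="Suc p"])
  have c2: "Suc (3*p+2) choose (p + Suc p + 1) = (3*Suc p) choose Suc p"
  proof -
    have "Suc (3*p+2) = 3*Suc p" "3*Suc p - Suc p = p + Suc p + 1" "Suc p \<le> 3*Suc p" by simp_all
    thus ?thesis using binomial_symmetric[of "Suc p" "3*Suc p"] by metis
  qed
  have e0: "ev p 0 = (2*Suc p) choose Suc p" by (simp add: ev_def mult_2 del: binomial_Suc_Suc)
  show ?thesis unfolding S1[symmetric] S0 c2 e0 ..
qed

lemma core_generic:
  fixes f s :: "nat \<Rightarrow> nat" and d m :: nat and t :: "'a::{idom,ring_char_0}"
  assumes rec: "\<And>n. (n+1)*(n+1)*(if n+1 \<le> d then f (n+1) else 0) + d*d*(if n \<le> d then f n else 0)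
                   = (n+1)*m*(if n+1 \<le> d then f (n+1) else 0) + n*n*(if n \<le> d then f n else 0)"
    and ks: "\<And>k. k \<le> d \<Longrightarrow> k * f k = d * s (d - k)"
    and d0: "d > 0"
  shows "(\<Sum>k\<le>d. of_nat (f k) * t^k) * (\<Sum>k\<le>d. of_nat (f k) * (1-t)^k)
       - (\<Sum>i\<le>d. of_nat (s i) * t^(d-i)) * (\<Sum>i\<le>d. of_nat (s i) * (1-t)^(d-i))
       = of_nat (f 0) * (\<Sum>k\<le>d. of_nat (f k))"
proof -
  define F where "F = (\<lambda>x::'a. \<Sum>k\<le>d. of_nat (f k) * x^k)"
  define S where "S = (\<lambda>x::'a. \<Sum>i\<le>d. of_nat (s i) * x^(d-i))"
  define W :: "'a poly" where "W = (\<Sum>k\<le>d. monom (of_nat (f k)) k)"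
  have cW: "coeff W n = of_nat (if n \<le> d then f n else 0)" for n
    by (simp add: W_def coeff_sum)
  have ode: "pCons 0 (pderiv (pderiv W)) - pCons 0 (pCons 0 (pderiv (pderiv W)))
     + smult (1 - of_nat m) (pderiv W) - pCons 0 (pderiv W) + smult (of_nat d * of_nat d) W = 0"
    by (rule ode_from_rec[where w="\<lambda>n. if n \<le> d then f n else 0"], rule cW, rule rec)
  have wr: "of_nat d * of_nat d * poly W t * poly W (1-t) - t*(1-t)*poly (pderiv W) t * poly (pderiv W) (1-t)
       = of_nat d * of_nat d * poly W 0 * poly W 1"
    by (rule wronsk[OF ode])
  have pW: "poly W x = F x" for x by (simp add: W_def F_def poly_sum poly_monom)
  have pW0: "poly W 0 = of_nat (f 0)"
  proof -
    have "poly W 0 = (\<Sum>k\<le>d. if k = 0 then of_nat (f k) else 0)"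
      unfolding W_def poly_sum poly_monom by (rule sum.cong) (auto simp: power_0_left)
    also have "\<dots> = of_nat (f 0)" by simp
    finally show ?thesis .
  qed
  have pW1: "poly W 1 = (\<Sum>k\<le>d. of_nat (f k))" by (simp add: W_def poly_sum poly_monom)
  have dW: "pderiv W = (\<Sum>k\<le>d. monom (of_nat k * of_nat (f k)) (k - 1))"
    using higher_pderiv_sum[of 1 "\<lambda>k. monom (of_nat (f k)) k" "{..d}"]
    by (simp add: W_def pderiv_monom)
  have pdW: "x * poly (pderiv W) x = of_nat d * S x" for x
  proof -
    have "x * poly (pderiv W) x = (\<Sum>k\<le>d. of_nat (k * f k) * x^k)"
      unfolding dW poly_sum sum_distrib_left
    proof (rule sum.cong)
      fix k assume "k \<in> {..d}"
      show "x * poly (monom (of_nat k * of_nat (f k)) (k - 1)) x = of_nat (k * f k) * x^k"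
        by (cases k) (simp_all add: poly_monom algebra_simps)
    qed simp
    also have "\<dots> = (\<Sum>k\<le>d. of_nat d * (of_nat (s (d-k)) * x^k))"
      by (rule sum.cong) (simp_all add: ks flip: of_nat_mult)
    also have "\<dots> = of_nat d * (\<Sum>k\<le>d. of_nat (s (d-k)) * x^k)"
      by (simp add: sum_distrib_left)
    also have "(\<Sum>k\<le>d. of_nat (s (d-k)) * x^k) = S x"
    proof -
      have "S x = (\<Sum>i\<in>{0..d}. of_nat (s i) * x^(d-i))" by (simp add: S_def atMost_atLeast0)
      also have "\<dots> = (\<Sum>i\<in>{0..d}. of_nat (s (d + 0 - i)) * x^(d-(d+0-i)))"
        by (rule sum.atLeastAtMost_rev)
      also have "\<dots> = (\<Sum>k\<le>d. of_nat (s (d-k)) * x^k)"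
        by (rule sum.cong) (auto simp: atMost_atLeast0)
      finally show ?thesis by simp
    qed
    finally show ?thesis .
  qed
  have "of_nat d * of_nat d * (F t * F (1-t) - S t * S (1-t))
      = of_nat d * of_nat d * (of_nat (f 0) * (\<Sum>k\<le>d. of_nat (f k)))"
  proof -
    have "of_nat d * of_nat d * (F t * F (1-t) - S t * S (1-t))
        = of_nat d * of_nat d * poly W t * poly W (1-t) - (t * poly (pderiv W) t) * ((1-t) * poly (pderiv W) (1-t))"
      by (simp add: pW pdW algebra_simps)
    also have "\<dots> = of_nat d * of_nat d * poly W 0 * poly W 1" using wr by (simp add: algebra_simps)
    finally show ?thesis by (simp add: pW0 pW1)
  qed
  moreover have "(of_nat d * of_nat d :: 'a) \<noteq> 0" using d0 by simp
  ultimately have "F t * F (1-t) - S t * S (1-t) = of_nat (f 0) * (\<Sum>k\<le>d. of_nat (f k))"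
    using mult_left_cancel by blast
  thus ?thesis by (simp add: F_def S_def)
qed

lemma refl_sum:
  fixes x :: "'a::comm_ring_1"
  shows "(\<Sum>k\<le>d. of_nat (g (d-k)) * x^k) = (\<Sum>i\<le>d. of_nat (g i) * x^(d-i))"
proof -
  have "(\<Sum>i\<le>d. of_nat (g i) * x^(d-i)) = (\<Sum>i\<in>{0..d}. of_nat (g i) * x^(d-i))" by (simp add: atMost_atLeast0)
  also have "\<dots> = (\<Sum>i\<in>{0..d}. of_nat (g (d + 0 - i)) * x^(d-(d+0-i)))"
    by (rule sum.atLeastAtMost_rev)
  also have "\<dots> = (\<Sum>k\<le>d. of_nat (g (d-k)) * x^k)"
    by (rule sum.cong) (auto simp: atMost_atLeast0)
  finally show ?thesis by simp
qed

lemma La: "polyDab d a b 1 (-t) = (\<Sum>i\<le>d. of_nat (cc d a b i) * (t::'a::comm_ring_1)^i)"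
  unfolding polyDab_def atMost_atLeast0
proof (rule sum.cong)
  fix i assume "i \<in> {0..d}"
  define X :: 'a where "X = of_nat ((a+d-i) choose a) * of_nat ((b+i) choose b)"
  have h: "(-1)^i * (-t)^i = t^i" by (simp flip: power_mult_distrib)
  have "(-1)^i * of_nat ((a+d-i) choose a) * of_nat ((b+i) choose b) * 1^(d-i) * (-t)^i
      = ((-1)^i * (-t)^i) * X" by (simp only: X_def power_one mult_1_right mult_1_left ac_simps)
  also have "\<dots> = of_nat (cc d a b i) * t^i" by (simp only: h X_def cc_def of_nat_mult ac_simps)
  finally show "(-1)^i * of_nat ((a+d-i) choose a) * of_nat ((b+i) choose b) * 1^(d-i) * (-t)^i
      = of_nat (cc d a b i) * t^i" .
qed simp

lemma Lb: "(-t) * polyDab d a b (-t) 1 = (-1)^(d+1) * (\<Sum>i\<le>d. of_nat (cc d a b i) * (t::'a::comm_ring_1)^(d+1-i))"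
  unfolding polyDab_def atMost_atLeast0 sum_distrib_left
proof (rule sum.cong)
  fix i assume i: "i \<in> {0..d}"
  define X :: 'a where "X = of_nat ((a+d-i) choose a) * of_nat ((b+i) choose b)"
  have e: "d+1-i = Suc (d-i)" using i by auto
  have e2: "i + (d+1-i) = d+1" using i by auto
  have "(-1)^i * ((-t)^(d-i) * (-t)) = (-1)^i * (-t)^(d+1-i)" unfolding e by (simp only: power_Suc mult.commute)
  also have "\<dots> = (-1)^i * ((-1)^(d+1-i) * t^(d+1-i))" by (simp only: power_minus[of t])
  also have "\<dots> = (-1)^(i + (d+1-i)) * t^(d+1-i)" by (simp only: power_add mult.assoc)
  also have "\<dots> = (-1)^(d+1) * t^(d+1-i)" by (simp only: e2)
  finally have h: "(-1)^i * ((-t)^(d-i) * (-t)) = (-1)^(d+1) * t^(d+1-i)" .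
  have "(-t) * ((-1)^i * of_nat ((a+d-i) choose a) * of_nat ((b+i) choose b) * (-t)^(d-i) * 1^i)
      = ((-1)^i * ((-t)^(d-i) * (-t))) * X" by (simp only: X_def power_one mult_1_right mult_1_left ac_simps)
  also have "\<dots> = ((-1)^(d+1) * t^(d+1-i)) * X" by (simp only: h)
  also have "\<dots> = (-1)^(d+1) * (of_nat (cc d a b i) * t^(d+1-i))" by (simp only: X_def cc_def of_nat_mult ac_simps)
  finally show "(-t) * ((-1)^i * of_nat ((a+d-i) choose a) * of_nat ((b+i) choose b) * (-t)^(d-i) * 1^i)
      = (-1)^(d+1) * (of_nat (cc d a b i) * t^(d+1-i))" .
qed simp

lemma core_odd:
  fixes \<delta> :: nat and b1 c1 :: "'a::{idom,ring_char_0}"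
  assumes d1: "\<delta> \<ge> 1" and bc: "b1 + c1 = -1"
  shows "(-1)^\<delta> * polyDab (\<delta>-1) \<delta> (\<delta>-1) 1 b1 * polyDab (\<delta>-1) \<delta> (\<delta>-1) 1 c1
    + b1 * polyDab (\<delta>-1) \<delta> (\<delta>-1) b1 1 * polyDab (\<delta>-1) \<delta> (\<delta>-1) 1 c1
    + c1 * polyDab (\<delta>-1) \<delta> (\<delta>-1) 1 b1 * polyDab (\<delta>-1) \<delta> (\<delta>-1) c1 1
    + (-1)^(\<delta>+1) * of_nat ((2*\<delta>) choose \<delta>) * of_nat ((3*\<delta>-1) choose (\<delta>-1)) = 0"
proof -
  obtain p where p: "\<delta> = Suc p" using d1 by (cases \<delta>) auto
  define t where "t = -b1"
  have b1t: "b1 = -t" by (simp add: t_def)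
  have c1t: "c1 = -(1-t)" using bc by (simp add: t_def algebra_simps eq_neg_iff_add_eq_0)
  define cf where "cf = cc p (Suc p) p"
  define u where "u = (\<lambda>x::'a. \<Sum>i\<le>p. of_nat (cf i) * x^i)"
  define r where "r = (\<lambda>x::'a. \<Sum>i\<le>p. of_nat (cf i) * x^(p+1-i))"
  define Q :: "'a \<Rightarrow> 'a \<Rightarrow> 'a" where "Q = polyDab p (Suc p) p"
  define K :: 'a where "K = of_nat ((2*\<delta>) choose \<delta>) * of_nat ((3*\<delta>-1) choose (\<delta>-1))"
  have Qu: "Q 1 (-x) = u x" for x by (simp add: Q_def u_def La cf_def)
  have Qr: "(-x) * Q (-x) 1 = (-1)^\<delta> * r x" for x
    using Lb[of x p "Suc p" p] by (simp only: Q_def r_def cf_def p Suc_eq_plus1)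
  have G: "(\<Sum>k\<le>Suc p. of_nat (eo p k) * x^k) * (\<Sum>k\<le>Suc p. of_nat (eo p k) * (1-x)^k)
       - (\<Sum>i\<le>Suc p. of_nat (cf i) * x^(Suc p-i)) * (\<Sum>i\<le>Suc p. of_nat (cf i) * (1-x)^(Suc p-i))
       = of_nat (eo p 0) * (\<Sum>k\<le>Suc p. of_nat (eo p k))" for x :: 'a
    by (rule core_generic[where m="2*Suc p"]) (use Orec[of _ p] O2[of _ p] in \<open>simp_all add: cf_def\<close>)
  have S_r: "(\<Sum>i\<le>Suc p. of_nat (cf i) * x^(Suc p-i)) = r x" for x :: 'a
    by (simp add: r_def cf_def O5)
  have F_ur: "(\<Sum>k\<le>Suc p. of_nat (eo p k) * x^k) = u x + r x" for x :: 'a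
  proof -
    have "(\<Sum>k\<le>Suc p. of_nat (eo p k) * x^k)
        = (\<Sum>k\<le>Suc p. of_nat (cf k) * x^k) + (\<Sum>k\<le>Suc p. of_nat (cf (Suc p - k)) * x^k)"
      by (simp add: O1 cf_def sum.distrib algebra_simps)
    also have "(\<Sum>k\<le>Suc p. of_nat (cf k) * x^k) = u x" by (simp add: u_def cf_def O5)
    also have "(\<Sum>k\<le>Suc p. of_nat (cf (Suc p - k)) * x^k) = r x"
      using refl_sum[of cf "Suc p" x] S_r by simp
    finally show ?thesis .
  qed
  have sumK: "of_nat (eo p 0) * (\<Sum>k\<le>Suc p. of_nat (eo p k)) = K"
  proof -
    have "of_nat (eo p 0) * (\<Sum>k\<le>Suc p. of_nat (eo p k)) = (of_nat (eo p 0 * (\<Sum>k\<le>Suc p. eo p k)) :: 'a)"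
      by simp
    also have "\<dots> = K" unfolding Osum K_def p by simp
    finally show ?thesis .
  qed
  have key: "(u t + r t) * (u (1-t) + r (1-t)) - r t * r (1-t) = K"
    using G[of t] unfolding S_r F_ur sumK .
  have h1: "Q 1 b1 = u t" unfolding b1t by (rule Qu)
  have h2: "Q 1 c1 = u (1-t)" unfolding c1t by (rule Qu)
  have h3: "b1 * Q b1 1 = (-1)^\<delta> * r t" unfolding b1t by (rule Qr)
  have h4: "c1 * Q c1 1 = (-1)^\<delta> * r (1-t)" unfolding c1t by (rule Qr)
  have "(-1)^\<delta> * Q 1 b1 * Q 1 c1 + b1 * Q b1 1 * Q 1 c1 + c1 * Q 1 b1 * Q c1 1 + (-1)^(\<delta>+1) * K
      = (-1)^\<delta> * (Q 1 b1 * Q 1 c1) + (b1 * Q b1 1) * Q 1 c1 + (c1 * Q c1 1) * Q 1 b1 - (-1)^\<delta> * K"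
    by (simp add: algebra_simps)
  also have "\<dots> = (-1)^\<delta> * (u t * u (1-t)) + ((-1)^\<delta> * r t) * u (1-t) + ((-1)^\<delta> * r (1-t)) * u t - (-1)^\<delta> * K"
    unfolding h1 h2 h3 h4 ..
  also have "\<dots> = (-1)^\<delta> * (((u t + r t) * (u (1-t) + r (1-t)) - r t * r (1-t)) - K)"
    by (simp add: algebra_simps)
  also have "\<dots> = 0" using key by simp
  finally show ?thesis by (simp add: Q_def K_def p mult.assoc)
qed

lemma core_even:
  fixes \<delta> :: nat and b1 c1 :: "'a::{idom,ring_char_0}"
  assumes d1: "\<delta> \<ge> 1" and bc: "b1 + c1 = -1"
  shows "(-1)^(\<delta>+1) * polyDab \<delta> \<delta> \<delta> 1 b1 * polyDab \<delta> \<delta> \<delta> 1 c1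
    + b1 * polyDab (\<delta>-1) \<delta> \<delta> b1 1 * polyDab \<delta> \<delta> \<delta> 1 c1
    + c1 * polyDab \<delta> \<delta> \<delta> 1 b1 * polyDab (\<delta>-1) \<delta> \<delta> c1 1
    + (-1)^\<delta> * of_nat ((2*\<delta>) choose \<delta>) * of_nat ((3*\<delta>) choose \<delta>) = 0"
proof -
  obtain p where p: "\<delta> = Suc p" using d1 by (cases \<delta>) auto
  define t where "t = -b1"
  have b1t: "b1 = -t" by (simp add: t_def)
  have c1t: "c1 = -(1-t)" using bc by (simp add: t_def algebra_simps eq_neg_iff_add_eq_0)
  define gf where "gf = cc (Suc p) (Suc p) (Suc p)"
  define hf where "hf = cc p (Suc p) (Suc p)"
  define q where "q = (\<lambda>x::'a. \<Sum>i\<le>Suc p. of_nat (gf i) * x^i)"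
  define r where "r = (\<lambda>x::'a. \<Sum>i\<le>p. of_nat (hf i) * x^(p+1-i))"
  define Q :: "'a \<Rightarrow> 'a \<Rightarrow> 'a" where "Q = polyDab (Suc p) (Suc p) (Suc p)"
  define R :: "'a \<Rightarrow> 'a \<Rightarrow> 'a" where "R = polyDab p (Suc p) (Suc p)"
  define K :: 'a where "K = of_nat ((2*\<delta>) choose \<delta>) * of_nat ((3*\<delta>) choose \<delta>)"
  have Qq: "Q 1 (-x) = q x" for x by (simp add: Q_def q_def La gf_def)
  have Rr: "(-x) * R (-x) 1 = (-1)^\<delta> * r x" for x
    using Lb[of x p "Suc p" "Suc p"] by (simp only: R_def r_def hf_def p Suc_eq_plus1)
  have G: "(\<Sum>k\<le>Suc p. of_nat (ev p k) * x^k) * (\<Sum>k\<le>Suc p. of_nat (ev p k) * (1-x)^k)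
       - (\<Sum>i\<le>Suc p. of_nat (hf i) * x^(Suc p-i)) * (\<Sum>i\<le>Suc p. of_nat (hf i) * (1-x)^(Suc p-i))
       = of_nat (ev p 0) * (\<Sum>k\<le>Suc p. of_nat (ev p k))" for x :: 'a
    by (rule core_generic[where m="2*Suc p+1"]) (use Erec[of _ p] E2[of _ p] in \<open>simp_all add: hf_def\<close>)
  have S_r: "(\<Sum>i\<le>Suc p. of_nat (hf i) * x^(Suc p-i)) = r x" for x :: 'a
    by (simp add: r_def hf_def E5)
  define F where "F = (\<lambda>x::'a. \<Sum>k\<le>Suc p. of_nat (ev p k) * x^k)"
  have q_Fr: "q x = F x + r x" for x :: 'a
  proof -
    have "q x = (\<Sum>k\<le>Suc p. of_nat (ev p k) * x^k) + (\<Sum>k\<le>Suc p. of_nat (hf (Suc p - k)) * x^k)"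
      unfolding q_def by (simp add: E1 gf_def hf_def sum.distrib algebra_simps)
    also have "(\<Sum>k\<le>Suc p. of_nat (hf (Suc p - k)) * x^k) = r x"
      using refl_sum[of hf "Suc p" x] S_r by simp
    finally show ?thesis by (simp add: F_def)
  qed
  have sumK: "of_nat (ev p 0) * (\<Sum>k\<le>Suc p. of_nat (ev p k)) = K"
  proof -
    have "of_nat (ev p 0) * (\<Sum>k\<le>Suc p. of_nat (ev p k)) = (of_nat (ev p 0 * (\<Sum>k\<le>Suc p. ev p k)) :: 'a)"
      by simp
    also have "\<dots> = K" unfolding Esum K_def p by simp
    finally show ?thesis .
  qed
  have key: "F t * F (1-t) - r t * r (1-t) = K"
    using G[of t] unfolding S_r sumK F_def .
  have h1: "Q 1 b1 = q t" unfolding b1t by (rule Qq)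
  have h2: "Q 1 c1 = q (1-t)" unfolding c1t by (rule Qq)
  have h3: "b1 * R b1 1 = (-1)^\<delta> * r t" unfolding b1t by (rule Rr)
  have h4: "c1 * R c1 1 = (-1)^\<delta> * r (1-t)" unfolding c1t by (rule Rr)
  have "(-1)^(\<delta>+1) * Q 1 b1 * Q 1 c1 + b1 * R b1 1 * Q 1 c1 + c1 * Q 1 b1 * R c1 1 + (-1)^\<delta> * K
      = - ((-1)^\<delta> * (Q 1 b1 * Q 1 c1)) + (b1 * R b1 1) * Q 1 c1 + (c1 * R c1 1) * Q 1 b1 + (-1)^\<delta> * K"
    by (simp add: algebra_simps)
  also have "\<dots> = - ((-1)^\<delta> * (q t * q (1-t))) + ((-1)^\<delta> * r t) * q (1-t) + ((-1)^\<delta> * r (1-t)) * q t + (-1)^\<delta> * K"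
    unfolding h1 h2 h3 h4 ..
  also have "\<dots> = (-1)^\<delta> * (K - (F t * F (1-t) - r t * r (1-t)))"
    unfolding q_Fr by (simp add: algebra_simps)
  also have "\<dots> = 0" using key by simp
  finally show ?thesis by (simp add: Q_def R_def K_def p mult.assoc)
qed

instance fract :: ("{idom,ring_char_0}") ring_char_0
proof
  show "inj (of_nat :: nat \<Rightarrow> 'a fract)"
  proof (rule injI)
    fix m n :: nat
    assume "(of_nat m :: 'a fract) = of_nat n"
    hence "Fract (of_nat m :: 'a) 1 = Fract (of_nat n) 1" by (simp add: of_nat_fract)
    hence "(of_nat m :: 'a) = of_nat n" by (simp add: eq_fract)
    thus "m = n" by simp
  qed
qed

lemma polyDab_hom: "polyDab d a b (A*X) (A*Y) = A^d * polyDab d a b X (Y::'a::comm_ring_1)"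
  unfolding polyDab_def sum_distrib_left
proof (rule sum.cong)
  fix i assume i: "i \<in> {0..d}"
  have h: "A^(d-i) * A^i = A^d" using i by (simp flip: power_add)
  have h2: "(A*X)^(d-i) * (A*Y)^i = A^d * (X^(d-i) * Y^i)"
  proof -
    have "(A*X)^(d-i) * (A*Y)^i = (A^(d-i) * A^i) * (X^(d-i) * Y^i)" by (simp only: power_mult_distrib ac_simps)
    thus ?thesis unfolding h .
  qed
  have "(-1)^i * of_nat ((a+d-i) choose a) * of_nat ((b+i) choose b) * (A*X)^(d-i) * (A*Y)^i
      = ((-1)^i * of_nat ((a+d-i) choose a) * of_nat ((b+i) choose b)) * ((A*X)^(d-i) * (A*Y)^i)"
    by (simp only: mult.assoc)
  also have "\<dots> = A^d * ((-1)^i * of_nat ((a+d-i) choose a) * of_nat ((b+i) choose b) * X^(d-i) * Y^i)"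
    unfolding h2 by (simp only: ac_simps)
  finally show "(-1)^i * of_nat ((a+d-i) choose a) * of_nat ((b+i) choose b) * (A*X)^(d-i) * (A*Y)^i
      = A^d * ((-1)^i * of_nat ((a+d-i) choose a) * of_nat ((b+i) choose b) * X^(d-i) * Y^i)" .
qed simp

lemma field_odd:
  fixes A B C :: "'f::{field,ring_char_0}"
  assumes d1: "\<delta> \<ge> 1" and A0: "A \<noteq> 0" and s: "A + B + C = 0"
  shows "(-1)^\<delta> * A * polyDab (\<delta>-1) \<delta> (\<delta>-1) A B * polyDab (\<delta>-1) \<delta> (\<delta>-1) A C
    + B * polyDab (\<delta>-1) \<delta> (\<delta>-1) B A * polyDab (\<delta>-1) \<delta> (\<delta>-1) A C
    + C * polyDab (\<delta>-1) \<delta> (\<delta>-1) A B * polyDab (\<delta>-1) \<delta> (\<delta>-1) C A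
    + (-1)^(\<delta>+1) * of_nat ((2*\<delta>) choose \<delta>) * of_nat ((3*\<delta>-1) choose (\<delta>-1)) * A^(2*\<delta>-1) = 0"
proof -
  define Q :: "'f \<Rightarrow> 'f \<Rightarrow> 'f" where "Q = polyDab (\<delta>-1) \<delta> (\<delta>-1)"
  define b1 where "b1 = B / A"
  define c1 where "c1 = C / A"
  define K :: 'f where "K = of_nat ((2*\<delta>) choose \<delta>) * of_nat ((3*\<delta>-1) choose (\<delta>-1))"
  have B: "B = A * b1" and C: "C = A * c1" and A: "A = A * 1" using A0 by (simp_all add: b1_def c1_def)
  have bc: "b1 + c1 = -1"
  proof -
    have "b1 + c1 = (B + C) / A" by (simp add: b1_def c1_def add_divide_distrib)
    also have "B + C = - A" using s by (simp add: algebra_simps eq_neg_iff_add_eq_0)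
    finally show ?thesis using A0 by simp
  qed
  have core: "(-1)^\<delta> * Q 1 b1 * Q 1 c1 + b1 * Q b1 1 * Q 1 c1 + c1 * Q 1 b1 * Q c1 1 + (-1)^(\<delta>+1) * K = 0"
    unfolding Q_def K_def using core_odd[OF d1 bc] by (simp add: mult.assoc)
  have hAB: "Q A B = A^(\<delta>-1) * Q 1 b1" unfolding Q_def using polyDab_hom[of "\<delta>-1" \<delta> "\<delta>-1" A 1 b1] B by simp
  have hAC: "Q A C = A^(\<delta>-1) * Q 1 c1" unfolding Q_def using polyDab_hom[of "\<delta>-1" \<delta> "\<delta>-1" A 1 c1] C by simp
  have hBA: "Q B A = A^(\<delta>-1) * Q b1 1" unfolding Q_def using polyDab_hom[of "\<delta>-1" \<delta> "\<delta>-1" A b1 1] B by simp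
  have hCA: "Q C A = A^(\<delta>-1) * Q c1 1" unfolding Q_def using polyDab_hom[of "\<delta>-1" \<delta> "\<delta>-1" A c1 1] C by simp
  have pw: "A^(2*\<delta>-1) = A * (A^(\<delta>-1) * A^(\<delta>-1))"
  proof -
    obtain p where p: "\<delta> = Suc p" using d1 by (cases \<delta>) auto
    show ?thesis by (simp add: p power_add mult_2)
  qed
  have "(-1)^\<delta> * A * Q A B * Q A C + B * Q B A * Q A C + C * Q A B * Q C A + (-1)^(\<delta>+1) * K * A^(2*\<delta>-1)
      = A^(2*\<delta>-1) * ((-1)^\<delta> * Q 1 b1 * Q 1 c1 + b1 * Q b1 1 * Q 1 c1 + c1 * Q 1 b1 * Q c1 1 + (-1)^(\<delta>+1) * K)"
    unfolding hAB hAC hBA hCA pw by (subst B, subst C) (simp add: algebra_simps)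
  also have "\<dots> = 0" using core by simp
  finally show ?thesis by (simp add: Q_def K_def mult.assoc)
qed

lemma field_even:
  fixes A B C :: "'f::{field,ring_char_0}"
  assumes d1: "\<delta> \<ge> 1" and A0: "A \<noteq> 0" and s: "A + B + C = 0"
  shows "(-1)^(\<delta>+1) * polyDab \<delta> \<delta> \<delta> A B * polyDab \<delta> \<delta> \<delta> A C
    + B * polyDab (\<delta>-1) \<delta> \<delta> B A * polyDab \<delta> \<delta> \<delta> A C
    + C * polyDab \<delta> \<delta> \<delta> A B * polyDab (\<delta>-1) \<delta> \<delta> C A
    + (-1)^\<delta> * of_nat ((2*\<delta>) choose \<delta>) * of_nat ((3*\<delta>) choose \<delta>) * A^(2*\<delta>) = 0"
proof -
  define Q :: "'f \<Rightarrow> 'f \<Rightarrow> 'f" where "Q = polyDab \<delta> \<delta> \<delta>"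
  define R :: "'f \<Rightarrow> 'f \<Rightarrow> 'f" where "R = polyDab (\<delta>-1) \<delta> \<delta>"
  define b1 where "b1 = B / A"
  define c1 where "c1 = C / A"
  define K :: 'f where "K = of_nat ((2*\<delta>) choose \<delta>) * of_nat ((3*\<delta>) choose \<delta>)"
  have B: "B = A * b1" and C: "C = A * c1" and A: "A = A * 1" using A0 by (simp_all add: b1_def c1_def)
  have bc: "b1 + c1 = -1"
  proof -
    have "b1 + c1 = (B + C) / A" by (simp add: b1_def c1_def add_divide_distrib)
    also have "B + C = - A" using s by (simp add: algebra_simps eq_neg_iff_add_eq_0)
    finally show ?thesis using A0 by simp
  qed
  have core: "(-1)^(\<delta>+1) * Q 1 b1 * Q 1 c1 + b1 * R b1 1 * Q 1 c1 + c1 * Q 1 b1 * R c1 1 + (-1)^\<delta> * K = 0"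
    unfolding Q_def R_def K_def using core_even[OF d1 bc] by (simp add: mult.assoc)
  have hAB: "Q A B = A^\<delta> * Q 1 b1" unfolding Q_def using polyDab_hom[of \<delta> \<delta> \<delta> A 1 b1] B by simp
  have hAC: "Q A C = A^\<delta> * Q 1 c1" unfolding Q_def using polyDab_hom[of \<delta> \<delta> \<delta> A 1 c1] C by simp
  have hBA: "R B A = A^(\<delta>-1) * R b1 1" unfolding R_def using polyDab_hom[of "\<delta>-1" \<delta> \<delta> A b1 1] B by simp
  have hCA: "R C A = A^(\<delta>-1) * R c1 1" unfolding R_def using polyDab_hom[of "\<delta>-1" \<delta> \<delta> A c1 1] C by simp
  have pw: "A^(2*\<delta>) = A^\<delta> * A^\<delta>" "A * A^(\<delta>-1) = A^\<delta>"
  proof -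
    show "A^(2*\<delta>) = A^\<delta> * A^\<delta>" by (simp add: mult_2 power_add)
    have "\<delta> = Suc (\<delta>-1)" using d1 by simp
    thus "A * A^(\<delta>-1) = A^\<delta>" by (metis power_Suc)
  qed
  have "(-1)^(\<delta>+1) * Q A B * Q A C + B * R B A * Q A C + C * Q A B * R C A + (-1)^\<delta> * K * A^(2*\<delta>)
      = (A^\<delta> * A^\<delta>) * ((-1)^(\<delta>+1) * Q 1 b1 * Q 1 c1 + b1 * R b1 1 * Q 1 c1 + c1 * Q 1 b1 * R c1 1 + (-1)^\<delta> * K)"
  proof -
    have h5: "B * R B A * Q A C = (A * A^(\<delta>-1)) * A^\<delta> * (b1 * R b1 1 * Q 1 c1)"
      unfolding hBA hAC by (subst B) (simp add: algebra_simps)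
    have h6: "C * Q A B * R C A = (A * A^(\<delta>-1)) * A^\<delta> * (c1 * Q 1 b1 * R c1 1)"
      unfolding hAB hCA by (subst C) (simp add: algebra_simps)
    show ?thesis unfolding h5 h6 unfolding pw hAB hAC by (simp add: algebra_simps)
  qed
  also have "\<dots> = 0" using core by simp
  finally show ?thesis by (simp add: Q_def R_def K_def mult.assoc)
qed

lemma poly_polyDab: "poly (polyDab d a b X Y) x = polyDab d a b (poly X x) (poly Y x)"
  by (simp add: polyDab_def poly_sum)

definition fr :: "'a::idom \<Rightarrow> 'a fract" where "fr x = Fract x 1"

lemma fr_add: "fr (x + y) = fr x + fr y" by (simp add: fr_def)
lemma fr_mult: "fr (x * y) = fr x * fr y" by (simp add: fr_def)
lemma fr_minus: "fr (- x) = - fr x" by (simp add: fr_def)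
lemma fr_one: "fr 1 = 1" by (simp add: fr_def One_fract_def)
lemma fr_of_nat: "fr (of_nat n) = of_nat n" by (simp add: fr_def Fract_of_nat_eq)
lemma fr_pow: "fr (x ^ n) = fr x ^ n" by (induct n) (simp_all add: fr_one fr_mult)
lemma fr_zero: "fr 0 = 0" by (simp add: fr_def Zero_fract_def)
lemma fr_sum: "fr (sum f A) = (\<Sum>a\<in>A. fr (f a))"
  by (induct A rule: infinite_finite_induct) (simp_all add: fr_add fr_zero)
lemma fr_polyDab: "fr (polyDab d a b X Y) = polyDab d a b (fr X) (fr Y)"
  by (simp only: polyDab_def fr_sum fr_mult fr_pow fr_minus fr_one fr_of_nat)
lemma fr_eq0: "fr x = 0 \<Longrightarrow> x = 0" by (simp add: fr_def Zero_fract_def eq_fract)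

theorem lemma3p4:
  fixes \<delta> :: nat
  assumes "\<delta> \<ge> 1"
  shows "(varA + varB + varC) dvd P_odd \<delta> \<and> (varA + varB + varC) dvd P_even \<delta>"
proof -
  define a' :: "int poly poly" where "a' = [:[:0,1:]:]"
  define b' :: "int poly poly" where "b' = [:0,1:]"
  define c' where "c' = - (a' + b')"
  have sum: "varA + varB + varC = [:a' + b', 1:]"
    by (simp add: varA_def varB_def varC_def a'_def b'_def)
  have pA: "poly varA x = a'" "poly varB x = b'" "poly varC x = x" for x
    by (simp_all add: varA_def varB_def varC_def a'_def b'_def)
  have a0: "fr a' \<noteq> 0" using fr_eq0[of a'] by (auto simp: a'_def)
  have s: "fr a' + fr b' + fr c' = 0" by (simp only: c'_def fr_minus fr_add)
  have odd: "poly (P_odd \<delta>) c' = 0"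
  proof -
    have e: "poly (P_odd \<delta>) c' = (-1)^\<delta> * a' * polyDab (\<delta>-1) \<delta> (\<delta>-1) a' b' * polyDab (\<delta>-1) \<delta> (\<delta>-1) a' c'
      + b' * polyDab (\<delta>-1) \<delta> (\<delta>-1) b' a' * polyDab (\<delta>-1) \<delta> (\<delta>-1) a' c'
      + c' * polyDab (\<delta>-1) \<delta> (\<delta>-1) a' b' * polyDab (\<delta>-1) \<delta> (\<delta>-1) c' a'
      + (-1)^(\<delta>+1) * of_nat ((2*\<delta>) choose \<delta>) * of_nat ((3*\<delta>-1) choose (\<delta>-1)) * a'^(2*\<delta>-1)"
      by (simp add: P_odd_def Let_def poly_polyDab pA)
    have "fr (poly (P_odd \<delta>) c') = 0"
      unfolding e by (simp only: fr_add fr_mult fr_pow fr_minus fr_one fr_of_nat fr_polyDab field_odd[OF assms a0 s])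
    thus ?thesis by (rule fr_eq0)
  qed
  have even: "poly (P_even \<delta>) c' = 0"
  proof -
    have e: "poly (P_even \<delta>) c' = (-1)^(\<delta>+1) * polyDab \<delta> \<delta> \<delta> a' b' * polyDab \<delta> \<delta> \<delta> a' c'
      + b' * polyDab (\<delta>-1) \<delta> \<delta> b' a' * polyDab \<delta> \<delta> \<delta> a' c'
      + c' * polyDab \<delta> \<delta> \<delta> a' b' * polyDab (\<delta>-1) \<delta> \<delta> c' a'
      + (-1)^\<delta> * of_nat ((2*\<delta>) choose \<delta>) * of_nat ((3*\<delta>) choose \<delta>) * a'^(2*\<delta>)"
      by (simp add: P_even_def Let_def poly_polyDab pA)
    have "fr (poly (P_even \<delta>) c') = 0"
      unfolding e by (simp only: fr_add fr_mult fr_pow fr_minus fr_one fr_of_nat fr_polyDab field_even[OF assms a0 s])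
    thus ?thesis by (rule fr_eq0)
  qed
  show ?thesis unfolding sum dvd_iff_poly_eq_0 using odd even by (simp add: c'_def)
qed

end
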